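(* Let $V=\{v_0,\dots,v_{L-1}\}$ be a set of $L\ge1$ boolean variables and let $n_0,\dots,n_t$ ($t\ge1$) be a sequence of nodes, node $n_j$ carrying a state $s_j:V\to\{0,1\}$ (distinct nodes may carry equal states). Let the child node be $n^c=n_t$ and let the parent node be $n^p=n_k$ for some $k\in\{0,\dots,t-1\}$, and suppose the states of $n^p$ and $n^c$ differ in exactly $e$ variables. For a node $n=n_m$ in the sequence, define $$\alpha_{0:t}(n)=\frac{1}{t}\sum_{i\in\{0,\dots,t\},\,i\neq m}\delta(n,n_i),\qquad \delta(n_m,n_i)=\frac{1}{L}\sum_{l=0}^{L-1}\mathbf{1}_{s_m(v_l)\neq s_i(v_l)}.$$ Then $$\alpha_{0:t}(n^p)-\frac{t-1}{t}\frac{e}{L}\le\alpha_{0:t}(n^c)\le\alpha_{0:t}(n^p)+\frac{t-1}{t}\frac{e}{L}.$$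
   Context: $\delta$ is the normalized Hamming distance between the states of two nodes; $\alpha_{0:t}(n)$ is the average normalized Hamming distance of a node of the sequence to all other nodes of the sequence. The $e$ variables on which parent and child differ are called the effects. *)

theory Defs
  imports Complex_Main
begin

text \<open>States: s j l is the boolean value of variable v_l in the state of node n_j.
  L variables v_0..v_(L-1).\<close>

definition hdist :: "nat \<Rightarrow> (nat \<Rightarrow> nat \<Rightarrow> bool) \<Rightarrow> nat \<Rightarrow> nat \<Rightarrow> real" where
  "hdist L s m i = (1 / real L) * real (card {l. l < L \<and> s m l \<noteq> s i l})"

definition alpha :: "nat \<Rightarrow> (nat \<Rightarrow> nat \<Rightarrow> bool) \<Rightarrow> nat \<Rightarrow> nat \<Rightarrow> real" where
  "alpha L s t m = (1 / real t) * (\<Sum>i\<in>{0..t} - {m}. hdist L s m i)"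

end

theory Submission
  imports Defs
begin

lemma hdist_sym: "hdist L s m i = hdist L s i m"
  unfolding hdist_def by (metis (no_types, lifting))

lemma card_tri:
  fixes L :: nat and s :: "nat \<Rightarrow> nat \<Rightarrow> bool"
  shows
  "card {l. l < L \<and> s a l \<noteq> s c l} \<le> card {l. l < L \<and> s a l \<noteq> s b l} + card {l. l < L \<and> s b l \<noteq> s c l}"
proof -
  have "{l. l < L \<and> s a l \<noteq> s c l} \<subseteq> {l. l < L \<and> s a l \<noteq> s b l} \<union> {l. l < L \<and> s b l \<noteq> s c l}" by auto
  then have "card {l. l < L \<and> s a l \<noteq> s c l} \<le> card ({l. l < L \<and> s a l \<noteq> s b l} \<union> {l. l < L \<and> s b l \<noteq> s c l})"
    proof (intro card_mono)
    show "finite ({l. l < L \<and> s a l \<noteq> s b l} \<union> {l. l < L \<and> s b l \<noteq> s c l})"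
      by (rule finite_subset[of _ "{..<L}"]) auto
  qed auto
  also have "\<dots> \<le> card {l. l < L \<and> s a l \<noteq> s b l} + card {l. l < L \<and> s b l \<noteq> s c l}" by (rule card_Un_le)
  finally show ?thesis .
qed

lemma hdist_tri: "L \<ge> 1 \<Longrightarrow> hdist L s a c \<le> hdist L s a b + hdist L s b c"
proof -
  assume "L \<ge> 1"
  have "real (card {l. l < L \<and> s a l \<noteq> s c l}) \<le> real (card {l. l < L \<and> s a l \<noteq> s b l}) + real (card {l. l < L \<and> s b l \<noteq> s c l})"
    using card_tri[of L s a c b] by linarith
  then show ?thesis unfolding hdist_def using \<open>L \<ge> 1\<close>
    by (simp add: divide_simps add_divide_distrib[symmetric])
qed

theorem theorem4:
  fixes L t k e :: nat and s :: "nat \<Rightarrow> nat \<Rightarrow> bool"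
  assumes "L \<ge> 1" and "t \<ge> 1" and "k < t"
    and "card {l. l < L \<and> s k l \<noteq> s t l} = e"
  shows "alpha L s t k - (real (t - 1) / real t) * (real e / real L) \<le> alpha L s t t
       \<and> alpha L s t t \<le> alpha L s t k + (real (t - 1) / real t) * (real e / real L)"
proof -
  define A where "A = {0..<t} - {k}"
  have fA: "finite A" and cA: "card A = t - 1" using assms(3) unfolding A_def by auto
  have e1: "{0..t} - {k} = insert t A" "t \<notin> A" using assms(3) unfolding A_def by auto
  have e2: "{0..t} - {t} = insert k A" "k \<notin> A" using assms(3) unfolding A_def by auto
  define d where "d = hdist L s k t"
  have dd: "d = real e / real L" unfolding d_def hdist_def assms(4) by simp
  have Sk: "(\<Sum>i\<in>{0..t} - {k}. hdist L s k i) = d + (\<Sum>i\<in>A. hdist L s k i)"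
    unfolding e1(1) using fA e1(2) d_def by simp
  have St: "(\<Sum>i\<in>{0..t} - {t}. hdist L s t i) = d + (\<Sum>i\<in>A. hdist L s t i)"
    unfolding e2(1) using fA e2(2) d_def hdist_sym by simp
  have b1: "hdist L s t i \<le> hdist L s k i + d" for i
    using hdist_tri[OF assms(1), of s t i k] hdist_sym[of L s] d_def by (metis add.commute)
  have b2: "hdist L s k i \<le> hdist L s t i + d" for i
    using hdist_tri[OF assms(1), of s k i t] hdist_sym[of L s] d_def by (metis add.commute)
  have u1: "(\<Sum>i\<in>A. hdist L s t i) \<le> (\<Sum>i\<in>A. hdist L s k i) + real (t-1) * d"
    using sum_mono[of A "\<lambda>i. hdist L s t i" "\<lambda>i. hdist L s k i + d", OF b1] cA
    by (simp add: sum.distrib)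
  have u2: "(\<Sum>i\<in>A. hdist L s k i) \<le> (\<Sum>i\<in>A. hdist L s t i) + real (t-1) * d"
    using sum_mono[of A "\<lambda>i. hdist L s k i" "\<lambda>i. hdist L s t i + d", OF b2] cA
    by (simp add: sum.distrib)
  have tp: "real t > 0" using assms(2) by simp
  have ak: "alpha L s t k = (d + (\<Sum>i\<in>A. hdist L s k i)) / real t"
    unfolding alpha_def Sk by simp
  have at: "alpha L s t t = (d + (\<Sum>i\<in>A. hdist L s t i)) / real t"
    unfolding alpha_def St by simp
  have "real (t - 1) / real t * d = real (t-1) * d / real t" by simp
  then show ?thesis unfolding ak at dd[symmetric] using u1 u2 tp
    by (simp add: divide_simps)
qed

end
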